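(* Let $G$ be a factor graph with known factors $\boldsymbol F=\{f_1,\dots,f_m\}$ and unknown factors $\boldsymbol F'=\{f'_1,\dots,f'_z\}$, and suppose that for every unknown factor $f_i\in\boldsymbol F'$ there is at least one known factor $f_j\in\boldsymbol F$ that is possibly identical to $f_i$ (i.e. $f_i\approx f_j$). Then the LIFG algorithm is able to replace all unknown potentials in $G$ by known potentials, i.e. (for a suitable choice of the threshold $\theta\in[0,1]$) every unknown factor is assigned the colour and the potential mappings of at least one known factor.
   Context: A factor graph (FG) $G=(\boldsymbol V,\boldsymbol E)$ is an undirected bipartite graph with node set $\boldsymbol V=\boldsymbol R\cup\boldsymbol F$, where $\boldsymbol R$ is a set of random variables (each $R$ with a finite range $\mathrm{range}(R)$) and $\boldsymbol F$ a set of factors; each factor $f_j$ defines a function $\phi_j(\mathcal R_j)$ mapping assignments of a sequence $\mathcal R_j$ of random variables to positive reals (potentials), and $R$ is adjacent to $f_j$ iff $R$ occurs in $\mathcal R_j$. A factor is \emph{unknown} if its argument list is known but its potential values are unknown; otherwise it is known. Evidence is a set of observed events $R=r$. $\mathrm{Ne}_G(v)$ denotes the set of neighbours of node $v$. The 2-step neighbourhood of a factor $f$ is $\mathrm{Ne}^2_G(f)=\{R\mid R\in\mathrm{Ne}_G(f)\}\cup\{f'\mid\exists R: R\in\mathrm{Ne}_G(f)\wedge f'\in\mathrm{Ne}_G(R)\}$, and $G[V']$ is the induced subgraph. For factors $f_i,f_j$, $G[\mathrm{Ne}^2_G(f_i)]$ and $G[\mathrm{Ne}^2_G(f_j)]$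 are \emph{indistinguishable} if $|\mathrm{Ne}_G(f_i)|=|\mathrm{Ne}_G(f_j)|$ and there is a bijection $\tau:\mathrm{Ne}_G(f_i)\to\mathrm{Ne}_G(f_j)$ such that for each $R_k$, $R_k$ and $\tau(R_k)$ have identical observed evidence, identical ranges, and $|\mathrm{Ne}_G(R_k)|=|\mathrm{Ne}_G(\tau(R_k))|$. Factors $f_i,f_j$ are \emph{possibly identical}, $f_i\approx f_j$, if their induced 2-step neighbourhoods are indistinguishable and at least one of them is unknown or both encode identical potential mappings. LIFG algorithm (input: FG $G$ with known factors $\boldsymbol F$, unknown factors $\boldsymbol F'$, evidence, threshold $\theta\in[0,1]$): (1) colour each known factor by its potentials; (2) give each unknown factor a unique colour; (3) for each unknown $f_i$, set $C_{f_i}=\emptyset$ and for every factor $f_j\ne f_i$ with $f_i\approx f_j$: if $f_j$ is unknown, give $f_j$ the colour of $f_i$, otherwise add $f_j$ to $C_{f_i}$; (4) for each $C_{f_i}$, let $C^{\ell}_{f_i}$ be a maximal subset of $C_{f_i}$ whose elements are pairwise possibly identical; if $|C^{\ell}_{f_i}|/|C_{f_i}|\ge\theta$, give all $f_j\in C^{\ell}_{f_i}$ the colour of $f_i$ and assign to $f_i$ the potentials of the factors in $C^{\ell}_{f_i}$; (5) run the Advanced Colour Passing (colour-passing lifting) algorithm on the resulting graph and evidence to obtain the lifted representation. *)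

theory Defs
  imports Complex_Main "HOL-Combinatorics.Permutations"
begin

text \<open>Random variables have type 'v, values type 'd, factors type 'f.
  args f is the argument sequence of factor f; rng R the range of variable R;
  ev R is the observed evidence for R (None = unobserved); pot f the potential
  mapping of f (meaningful for known factors only).\<close>
record ('v, 'd, 'f) fg =
  known   :: "'f set"
  unknown :: "'f set"
  args    :: "'f \<Rightarrow> 'v list"
  rng     :: "'v \<Rightarrow> 'd set"
  ev      :: "'v \<Rightarrow> 'd option"
  pot     :: "'f \<Rightarrow> 'd list \<Rightarrow> real"

definition factors :: "('v,'d,'f) fg \<Rightarrow> 'f set" where
  "factors G = known G \<union> unknown G"

definition assignments :: "('v,'d,'f) fg \<Rightarrow> 'f \<Rightarrow> 'd list set" where
  "assignments G f = {xs. length xs = length (args G f) \<and>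
                         (\<forall>k<length xs. xs ! k \<in> rng G (args G f ! k))}"

definition wf_fg :: "('v,'d,'f) fg \<Rightarrow> bool" where
  "wf_fg G \<longleftrightarrow> finite (known G) \<and> finite (unknown G) \<and> known G \<inter> unknown G = {}
     \<and> (\<forall>f\<in>factors G. \<forall>R\<in>set (args G f). finite (rng G R))
     \<and> (\<forall>f\<in>factors G. \<forall>R\<in>set (args G f). \<forall>r. ev G R = Some r \<longrightarrow> r \<in> rng G R)
     \<and> (\<forall>f\<in>known G. \<forall>xs\<in>assignments G f. pot G f xs > 0)"

definition fnbrs :: "('v,'d,'f) fg \<Rightarrow> 'f \<Rightarrow> 'v set" where
  "fnbrs G f = set (args G f)"

definition vnbrs :: "('v,'d,'f) fg \<Rightarrow> 'v \<Rightarrow> 'f set" where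
  "vnbrs G R = {f \<in> factors G. R \<in> set (args G f)}"

text \<open>Indistinguishability of the induced 2-step neighbourhoods.\<close>
definition indist :: "('v,'d,'f) fg \<Rightarrow> 'f \<Rightarrow> 'f \<Rightarrow> bool" where
  "indist G fi fj \<longleftrightarrow> card (fnbrs G fi) = card (fnbrs G fj) \<and>
     (\<exists>\<tau>. bij_betw \<tau> (fnbrs G fi) (fnbrs G fj) \<and>
        (\<forall>R\<in>fnbrs G fi. ev G (\<tau> R) = ev G R \<and> rng G (\<tau> R) = rng G R \<and>
                        card (vnbrs G (\<tau> R)) = card (vnbrs G R)))"

definition identical_pot :: "('v,'d,'f) fg \<Rightarrow> 'f \<Rightarrow> 'f \<Rightarrow> bool" where
  "identical_pot G fi fj \<longleftrightarrow> length (args G fj) = length (args G fi) \<and>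
     (\<exists>p. p permutes {..<length (args G fi)} \<and>
        (\<forall>xs. length xs = length (args G fi) \<longrightarrow>
            (xs \<in> assignments G fi \<longleftrightarrow> permute_list p xs \<in> assignments G fj) \<and>
            (xs \<in> assignments G fi \<longrightarrow> pot G fi xs = pot G fj (permute_list p xs))))"

definition poss_ident :: "('v,'d,'f) fg \<Rightarrow> 'f \<Rightarrow> 'f \<Rightarrow> bool" where
  "poss_ident G fi fj \<longleftrightarrow> indist G fi fj \<and>
     (fi \<in> unknown G \<or> fj \<in> unknown G \<or> identical_pot G fi fj)"

definition init_colouring :: "('v,'d,'f) fg \<Rightarrow> ('f \<Rightarrow> nat) \<Rightarrow> bool" where
  "init_colouring G col \<longleftrightarrow>
     (\<forall>f\<in>known G. \<forall>g\<in>known G. col f = col g \<longleftrightarrow> identical_pot G f g) \<and>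
     (\<forall>f\<in>unknown G. \<forall>g\<in>factors G. g \<noteq> f \<longrightarrow> col g \<noteq> col f)"

definition step3 :: "('v,'d,'f) fg \<Rightarrow> 'f \<Rightarrow> ('f \<Rightarrow> nat) \<Rightarrow> ('f \<Rightarrow> nat)" where
  "step3 G f col = (\<lambda>g. if g \<in> unknown G \<and> g \<noteq> f \<and> poss_ident G f g then col f else col g)"

definition cand :: "('v,'d,'f) fg \<Rightarrow> 'f \<Rightarrow> 'f set" where
  "cand G f = {g \<in> known G. g \<noteq> f \<and> poss_ident G f g}"

definition maximal_pi_subset :: "('v,'d,'f) fg \<Rightarrow> 'f set \<Rightarrow> 'f set \<Rightarrow> bool" where
  "maximal_pi_subset G C L \<longleftrightarrow> L \<subseteq> C \<and> pairwise (poss_ident G) L \<and>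
     (\<forall>L'. L \<subseteq> L' \<and> L' \<subseteq> C \<and> pairwise (poss_ident G) L' \<longrightarrow> L' = L)"

text \<open>Step (4) for one unknown factor f; L is the chosen maximal subset C^l_f and
  src f \<in> L the factor whose potentials are assigned to f.\<close>
definition step4 :: "('v,'d,'f) fg \<Rightarrow> real \<Rightarrow> ('f \<Rightarrow> 'f set) \<Rightarrow> ('f \<Rightarrow> 'f) \<Rightarrow> 'f \<Rightarrow>
    ('f \<Rightarrow> nat) \<times> ('f \<Rightarrow> 'd list \<Rightarrow> real) \<Rightarrow> ('f \<Rightarrow> nat) \<times> ('f \<Rightarrow> 'd list \<Rightarrow> real)" where
  "step4 G \<theta> L src f st =
     (if cand G f \<noteq> {} \<and> real (card (L f)) / real (card (cand G f)) \<ge> \<theta>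
      then ((\<lambda>g. if g \<in> L f then fst st f else fst st g), (snd st)(f := pot G (src f)))
      else st)"

text \<open>Possible results (final colouring, final potentials) of steps (1)-(4) of LIFG
  with threshold \<theta>, over all processing orders and all admissible choices.\<close>
definition lifg_run :: "('v,'d,'f) fg \<Rightarrow> real \<Rightarrow> ('f \<Rightarrow> nat) \<Rightarrow> ('f \<Rightarrow> 'd list \<Rightarrow> real) \<Rightarrow> bool" where
  "lifg_run G \<theta> col pot' \<longleftrightarrow>
     (\<exists>us col0 L src. distinct us \<and> set us = unknown G \<and> init_colouring G col0 \<and>
        (\<forall>f\<in>unknown G. maximal_pi_subset G (cand G f) (L f)) \<and>
        (\<forall>f\<in>unknown G. L f \<noteq> {} \<longrightarrow> src f \<in> L f) \<and>
        (col, pot') = fold (step4 G \<theta> L src) us (fold (step3 G) us col0, pot G))"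

end

theory Submission
  imports Defs
begin

lemma ip_refl: "identical_pot G f f"
  unfolding identical_pot_def by (rule conjI, simp, rule exI[of _ id], simp add: permutes_id)

lemma ip_sym: fixes G :: "('v,'d,'f) fg" assumes "identical_pot G f g" shows "identical_pot G g f"
proof -
  obtain p where len: "length (args G g) = length (args G f)"
    and p: "p permutes {..<length (args G f)}"
    and H: "\<forall>xs. length xs = length (args G f) \<longrightarrow>
            (xs \<in> assignments G f \<longleftrightarrow> permute_list p xs \<in> assignments G g) \<and>
            (xs \<in> assignments G f \<longrightarrow> pot G f xs = pot G g (permute_list p xs))"
    using assms unfolding identical_pot_def by blast
  have ip: "inv p permutes {..<length (args G f)}" using p by (rule permutes_inv)
  have bck: "permute_list p (permute_list (inv p) ys) = ys" if "length ys = length (args G f)" for ys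
  proof -
    have "permute_list p (permute_list (inv p) ys) = permute_list (inv p \<circ> p) ys"
      using permute_list_compose[of p ys "inv p"] p that by simp
    also have "inv p \<circ> p = id" using permutes_inv_o(2)[OF p] .
    finally show ?thesis by simp
  qed
  show ?thesis unfolding identical_pot_def
  proof (intro conjI exI[of _ "inv p"] allI impI)
    show "length (args G f) = length (args G g)" using len by simp
    show "inv p permutes {..<length (args G g)}" using ip len by simp
    fix ys :: "'d list" assume ly: "length ys = length (args G g)"
    let ?xs = "permute_list (inv p) ys"
    have lx: "length ?xs = length (args G f)" using ly len by simp
    have b: "permute_list p ?xs = ys" using bck ly len by simp
    show "(ys \<in> assignments G g) = (?xs \<in> assignments G f)" using H lx b by metis
    assume "ys \<in> assignments G g"
    then show "pot G g ys = pot G f ?xs" using H lx b by metis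
  qed
qed

lemma ip_trans: fixes G :: "('v,'d,'f) fg" assumes "identical_pot G f g" "identical_pot G g k" shows "identical_pot G f k"
proof -
  obtain p where len: "length (args G g) = length (args G f)"
    and p: "p permutes {..<length (args G f)}"
    and H: "\<forall>xs. length xs = length (args G f) \<longrightarrow>
            (xs \<in> assignments G f \<longleftrightarrow> permute_list p xs \<in> assignments G g) \<and>
            (xs \<in> assignments G f \<longrightarrow> pot G f xs = pot G g (permute_list p xs))"
    using assms(1) unfolding identical_pot_def by blast
  obtain q where len2: "length (args G k) = length (args G g)"
    and q: "q permutes {..<length (args G g)}"
    and H2: "\<forall>xs. length xs = length (args G g) \<longrightarrow>
            (xs \<in> assignments G g \<longleftrightarrow> permute_list q xs \<in> assignments G k) \<and>
            (xs \<in> assignments G g \<longrightarrow> pot G g xs = pot G k (permute_list q xs))"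
    using assms(2) unfolding identical_pot_def by blast
  have pq: "p \<circ> q permutes {..<length (args G f)}" using permutes_compose[of q _ p] p q len by simp
  have comp: "permute_list (p \<circ> q) xs = permute_list q (permute_list p xs)"
    if "length xs = length (args G f)" for xs
    using permute_list_compose[of q xs p] q len that by simp
  show ?thesis unfolding identical_pot_def
  proof (intro conjI exI[of _ "p \<circ> q"] allI impI)
    show "length (args G k) = length (args G f)" using len len2 by simp
    show "p \<circ> q permutes {..<length (args G f)}" by (rule pq)
    fix xs :: "'d list" assume lx: "length xs = length (args G f)"
    have l2: "length (permute_list p xs) = length (args G g)" using lx len by simp
    show "(xs \<in> assignments G f) = (permute_list (p \<circ> q) xs \<in> assignments G k)"
      using H H2 lx l2 comp[OF lx] by metis
    assume "xs \<in> assignments G f"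
    then show "pot G f xs = pot G k (permute_list (p \<circ> q) xs)"
      using H H2 lx l2 comp[OF lx] by metis
  qed
qed

lemma indist_sym: fixes G :: "('v,'d,'f) fg" assumes "indist G f g" shows "indist G g f"
proof -
  obtain \<tau> where c: "card (fnbrs G f) = card (fnbrs G g)" and b: "bij_betw \<tau> (fnbrs G f) (fnbrs G g)"
    and P: "\<forall>R\<in>fnbrs G f. ev G (\<tau> R) = ev G R \<and> rng G (\<tau> R) = rng G R \<and>
                        card (vnbrs G (\<tau> R)) = card (vnbrs G R)"
    using assms unfolding indist_def by blast
  let ?s = "the_inv_into (fnbrs G f) \<tau>"
  have bs: "bij_betw ?s (fnbrs G g) (fnbrs G f)" using b by (rule bij_betw_the_inv_into)
  have "\<forall>R\<in>fnbrs G g. ev G (?s R) = ev G R \<and> rng G (?s R) = rng G R \<and>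
                        card (vnbrs G (?s R)) = card (vnbrs G R)"
  proof
    fix R assume R: "R \<in> fnbrs G g"
    have s: "?s R \<in> fnbrs G f" using bs R bij_betwE by blast
    have "\<tau> (?s R) = R" using b R f_the_inv_into_f_bij_betw by metis
    then show "ev G (?s R) = ev G R \<and> rng G (?s R) = rng G R \<and> card (vnbrs G (?s R)) = card (vnbrs G R)"
      using P s by metis
  qed
  then show ?thesis unfolding indist_def using c bs by metis
qed

lemma indist_trans: fixes G :: "('v,'d,'f) fg" assumes "indist G f g" "indist G g k" shows "indist G f k"
proof -
  obtain \<tau> where c: "card (fnbrs G f) = card (fnbrs G g)" and b: "bij_betw \<tau> (fnbrs G f) (fnbrs G g)"
    and P: "\<forall>R\<in>fnbrs G f. ev G (\<tau> R) = ev G R \<and> rng G (\<tau> R) = rng G R \<and>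
                        card (vnbrs G (\<tau> R)) = card (vnbrs G R)"
    using assms(1) unfolding indist_def by blast
  obtain \<sigma> where c2: "card (fnbrs G g) = card (fnbrs G k)" and b2: "bij_betw \<sigma> (fnbrs G g) (fnbrs G k)"
    and P2: "\<forall>R\<in>fnbrs G g. ev G (\<sigma> R) = ev G R \<and> rng G (\<sigma> R) = rng G R \<and>
                        card (vnbrs G (\<sigma> R)) = card (vnbrs G R)"
    using assms(2) unfolding indist_def by blast
  have bb: "bij_betw (\<sigma> \<circ> \<tau>) (fnbrs G f) (fnbrs G k)" using b b2 bij_betw_trans by blast
  have "\<forall>R\<in>fnbrs G f. ev G ((\<sigma> \<circ> \<tau>) R) = ev G R \<and> rng G ((\<sigma> \<circ> \<tau>) R) = rng G R \<and>
                        card (vnbrs G ((\<sigma> \<circ> \<tau>) R)) = card (vnbrs G R)"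
  proof
    fix R assume R: "R \<in> fnbrs G f"
    have "\<tau> R \<in> fnbrs G g" using b R bij_betwE by blast
    then show "ev G ((\<sigma> \<circ> \<tau>) R) = ev G R \<and> rng G ((\<sigma> \<circ> \<tau>) R) = rng G R \<and>
                        card (vnbrs G ((\<sigma> \<circ> \<tau>) R)) = card (vnbrs G R)"
      using P P2 R by auto
  qed
  then show ?thesis unfolding indist_def using c c2 bb by metis
qed


lemma fold_step3_unch:
  "(\<forall>y\<in>set ys. \<not> (g \<in> unknown G \<and> g \<noteq> y \<and> poss_ident G y g)) \<Longrightarrow>
   fold (step3 G) ys col g = col g"
  by (induction ys arbitrary: col) (auto simp: step3_def)

lemma fold_step3_class:
  fixes G :: "('v,'d,'f) fg"
  assumes U: "set us \<subseteq> unknown G" and f: "f \<in> set us" and f': "f' \<in> set us"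
    and i: "indist G f f'"
  shows "fold (step3 G) us col f = fold (step3 G) us col f'"
proof -
  have "\<exists>y\<in>set us. indist G y f" using f' indist_sym[OF i] by blast
  then obtain xs u zs where us: "us = xs @ u # zs" and iu: "indist G u f"
    and nz: "\<forall>z\<in>set zs. \<not> indist G z f"
    using split_list_last_prop[of us "\<lambda>y. indist G y f"] by blast
  have uU: "u \<in> unknown G" using U us by auto
  have iu': "indist G u f'" using indist_trans[OF iu i] .
  define c1 where "c1 = fold (step3 G) xs col"
  define c2 where "c2 = step3 G u c1"
  have fU: "f \<in> unknown G" "f' \<in> unknown G" using U f f' by auto
  have "c2 f = c1 u" using iu uU fU unfolding c2_def step3_def poss_ident_def by auto
  moreover have "c2 f' = c1 u" using iu' uU fU unfolding c2_def step3_def poss_ident_def by auto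
  moreover have "fold (step3 G) zs c2 f = c2 f"
    using nz by (intro fold_step3_unch) (auto simp: poss_ident_def)
  moreover have "fold (step3 G) zs c2 f' = c2 f'"
  proof (intro fold_step3_unch ballI notI)
    fix y assume y: "y \<in> set zs" and "f' \<in> unknown G \<and> f' \<noteq> y \<and> poss_ident G y f'"
    then have "indist G y f'" by (auto simp: poss_ident_def)
    then have "indist G y f" using i indist_sym indist_trans by metis
    then show False using nz y by blast
  qed
  ultimately show ?thesis unfolding us c2_def c1_def by simp
qed

lemma fold_step4_col:
  "(\<forall>y\<in>set ys. g \<notin> L y) \<Longrightarrow> fst (fold (step4 G \<theta> L src) ys st) g = fst st g"
  by (induction ys arbitrary: st) (auto simp: step4_def)

lemma fold_step4_pot:
  "f \<notin> set ys \<Longrightarrow> snd (fold (step4 G \<theta> L src) ys st) f = snd st f"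
  by (induction ys arbitrary: st) (auto simp: step4_def)

lemma exists_max_subset:
  assumes "finite C" shows "\<exists>L. maximal_pi_subset G C L"
proof -
  define S where "S = {L. L \<subseteq> C \<and> pairwise (poss_ident G) L}"
  have fS: "finite S" using assms unfolding S_def by simp
  have "{} \<in> S" unfolding S_def by simp
  then have ne: "card ` S \<noteq> {}" by blast
  have "Max (card ` S) \<in> card ` S" using fS ne by simp
  then obtain L where L: "L \<in> S" "card L = Max (card ` S)" by auto
  have "maximal_pi_subset G C L" unfolding maximal_pi_subset_def
  proof (intro conjI allI impI)
    show "L \<subseteq> C" "pairwise (poss_ident G) L" using L unfolding S_def by auto
    fix L' assume a: "L \<subseteq> L' \<and> L' \<subseteq> C \<and> pairwise (poss_ident G) L'"
    then have "L' \<in> S" unfolding S_def by auto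
    then have "card L' \<le> card L" using L fS by simp
    moreover have "finite L'" using a assms finite_subset by blast
    moreover have "card L \<le> card L'" using a \<open>finite L'\<close> card_mono by blast
    ultimately have "card L = card L'" by simp
    then show "L' = L" using a \<open>finite L'\<close> card_subset_eq by metis
  qed
  then show ?thesis by blast
qed

lemma wf_basic: "wf_fg G \<Longrightarrow> finite (known G) \<and> finite (unknown G) \<and> known G \<inter> unknown G = {}"
  unfolding wf_fg_def by blast

lemma exists_init:
  fixes G :: "('v,'d,'f) fg"
  assumes wf: "wf_fg G" shows "\<exists>col. init_colouring G col"
proof -
  have fin: "finite (factors G)" using wf_basic[OF wf] unfolding factors_def by simp
  have dis: "known G \<inter> unknown G = {}" using wf_basic[OF wf] by simp
  obtain h :: "'f \<Rightarrow> nat" where h: "inj_on h (factors G)"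
    using finite_imp_inj_to_nat_seg[OF fin] by blast
  define cl where "cl f = {g \<in> known G. identical_pot G f g}" for f
  define col where "col f = (if f \<in> known G then Min (h ` cl f) else h f)" for f
  have finK: "finite (known G)" using wf_basic[OF wf] by simp
  have cl_ne: "h ` cl f \<noteq> {}" if "f \<in> known G" for f
  proof -
    have "f \<in> cl f" using that ip_refl[of G f] unfolding cl_def by simp
    then show ?thesis by blast
  qed
  have cl_fin: "finite (h ` cl f)" for f using finK unfolding cl_def by simp
  have colin: "\<exists>a\<in>cl f. col f = h a" if "f \<in> known G" for f
  proof -
    have "Min (h ` cl f) \<in> h ` cl f" using cl_ne[OF that] cl_fin by simp
    then show ?thesis using that unfolding col_def by auto
  qed
  have "init_colouring G col" unfolding init_colouring_def
  proof (intro conjI ballI impI)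
    fix f g assume f: "f \<in> known G" and g: "g \<in> known G"
    show "(col f = col g) = identical_pot G f g"
    proof
      assume "identical_pot G f g"
      then have "identical_pot G f x \<longleftrightarrow> identical_pot G g x" for x
        using ip_trans[OF ip_sym[OF \<open>identical_pot G f g\<close>]] ip_trans[OF \<open>identical_pot G f g\<close>] by blast
      then have "cl f = cl g" unfolding cl_def by simp
      then show "col f = col g" using f g unfolding col_def by simp
    next
      assume e: "col f = col g"
      obtain a where a: "a \<in> cl f" "col f = h a" using colin[OF f] by blast
      obtain b where b: "b \<in> cl g" "col g = h b" using colin[OF g] by blast
      have "a \<in> factors G" "b \<in> factors G" using a b unfolding cl_def factors_def by auto
      then have "a = b" using inj_onD[OF h, of a b] e a b by simp
      then have "identical_pot G f a" "identical_pot G g a" using a b unfolding cl_def by auto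
      then show "identical_pot G f g" by (rule ip_trans[OF _ ip_sym])
    qed
  next
    fix f g assume f: "f \<in> unknown G" and g: "g \<in> factors G" and ne: "g \<noteq> f"
    have fK: "f \<notin> known G" using f dis by blast
    have ff: "f \<in> factors G" using f unfolding factors_def by simp
    show "col g \<noteq> col f"
    proof (cases "g \<in> known G")
      case True
      obtain a where a: "a \<in> cl g" "col g = h a" using colin[OF True] by blast
      have "a \<in> known G" using a unfolding cl_def by auto
      then have "a \<noteq> f" "a \<in> factors G" using fK unfolding factors_def by auto
      then have "h a \<noteq> h f" using inj_onD[OF h, of a f] ff by blast
      then show ?thesis using a fK unfolding col_def by simp
    next
      case False
      have "h g \<noteq> h f" using inj_onD[OF h, of g f] ff g ne by blast
      then show ?thesis using fK False unfolding col_def by simp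
    qed
  qed
  then show ?thesis by blast
qed

theorem mainTheorem1:
  fixes G :: "('v, 'd, 'f) fg"
  assumes "wf_fg G"
    and "\<forall>fi\<in>unknown G. \<exists>fj\<in>known G. poss_ident G fi fj"
  shows "\<exists>\<theta>::real. 0 \<le> \<theta> \<and> \<theta> \<le> 1 \<and> (\<exists>col pot'. lifg_run G \<theta> col pot') \<and>
           (\<forall>col pot'. lifg_run G \<theta> col pot' \<longrightarrow>
              (\<forall>f\<in>unknown G. \<exists>g\<in>known G. col f = col g \<and> pot' f = pot G g))"
proof -
  have wf: "wf_fg G" by fact
  have dis: "known G \<inter> unknown G = {}" and finK: "finite (known G)" and finU: "finite (unknown G)"
    using wf_basic[OF wf] by auto
  have cne: "cand G f \<noteq> {}" if "f \<in> unknown G" for f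
    using assms(2) that dis unfolding cand_def by blast
  have Lne: "L \<noteq> {}" if fU0: "f \<in> unknown G" and mx0: "maximal_pi_subset G (cand G f) L" for f L
  proof
    assume e: "L = {}"
    obtain g where g: "g \<in> cand G f" using cne[OF fU0] by blast
    have "\<forall>L'. L' \<subseteq> cand G f \<and> pairwise (poss_ident G) L' \<longrightarrow> L' = {}"
      using mx0 unfolding maximal_pi_subset_def e by simp
    then have "{g} = L" using g e by (metis empty_subsetI insert_subset pairwise_singleton)
    then show False using e by simp
  qed
  have cK: "cand G f \<subseteq> known G" for f unfolding cand_def by auto
  have run_prop: "\<forall>f\<in>unknown G. \<exists>g\<in>known G. col f = col g \<and> pot' f = pot G g"
    if run: "lifg_run G 0 col pot'" for col pot'
  proof
    fix f assume fU: "f \<in> unknown G"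
    obtain us col0 L src where us: "distinct us" "set us = unknown G"
      and mx: "\<forall>f\<in>unknown G. maximal_pi_subset G (cand G f) (L f)"
      and sr: "\<forall>f\<in>unknown G. L f \<noteq> {} \<longrightarrow> src f \<in> L f"
      and eq: "(col, pot') = fold (step4 G 0 L src) us (fold (step3 G) us col0, pot G)"
      using run unfolding lifg_run_def by blast
    define c1 where "c1 = fold (step3 G) us col0"
    have LK: "L u \<subseteq> known G" if "u \<in> unknown G" for u
    proof -
      have "L u \<subseteq> cand G u" using mx that unfolding maximal_pi_subset_def by simp
      then show ?thesis using cK by blast
    qed
    have srcL: "src u \<in> L u" if "u \<in> unknown G" for u using sr mx Lne that by blast
    have st4: "step4 G 0 L src u st = ((\<lambda>g. if g\<in>L u then fst st u else fst st g), (snd st)(u:=pot G (src u)))"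
      if "u \<in> unknown G" for u st
      using cne[OF that] unfolding step4_def by simp
    have colE: "col = fst (fold (step4 G 0 L src) us (c1, pot G))" using eq unfolding c1_def
      by (metis fst_conv)
    have potE: "pot' = snd (fold (step4 G 0 L src) us (c1, pot G))" using eq unfolding c1_def
      by (metis snd_conv)
    have nL: "\<forall>y\<in>set ys. u \<notin> L y" if "u \<in> unknown G" "set ys \<subseteq> unknown G" for u ys
      using that LK dis by blast
    obtain xs ys where uss: "us = xs @ f # ys" using fU us split_list by metis
    have fys: "f \<notin> set ys" using us(1) uss by simp
    have "pot' f = pot G (src f)"
      unfolding potE uss by (simp add: fold_step4_pot[OF fys] st4[OF fU])
    moreover have "col f = c1 f"
    proof -
      have nf: "\<forall>y\<in>set us. f \<notin> L y" using nL[OF fU, of us] us(2) by simp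
      show ?thesis unfolding colE by (simp add: fold_step4_col[OF nf])
    qed
    moreover have "col (src f) = c1 f"
    proof -
      have "\<exists>y\<in>set us. src f \<in> L y" using fU us srcL by blast
      then obtain as u zs where uz: "us = as @ u # zs" and su: "src f \<in> L u"
        and nz: "\<forall>z\<in>set zs. src f \<notin> L z"
        using split_list_last_prop[of us "\<lambda>y. src f \<in> L y"] by blast
      have uU: "u \<in> unknown G" using uz us by auto
      define st1 where "st1 = fold (step4 G 0 L src) as (c1, pot G)"
      have "set as \<subseteq> unknown G" using uz us(2) by auto
      then have na: "\<forall>y\<in>set as. u \<notin> L y" using nL[OF uU, of as] by simp
      have "fst st1 u = c1 u" unfolding st1_def by (simp add: fold_step4_col[OF na])
      then have "fst (step4 G 0 L src u st1) (src f) = c1 u" using st4[OF uU] su by simp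
      then have "col (src f) = c1 u" unfolding colE uz st1_def
        by (simp add: fold_step4_col[OF nz])
      have "L u \<subseteq> cand G u" using mx uU unfolding maximal_pi_subset_def by simp
      then have "src f \<in> cand G u" using su by blast
      then have i1: "indist G u (src f)" unfolding cand_def poss_ident_def by simp
      have "L f \<subseteq> cand G f" using mx fU unfolding maximal_pi_subset_def by simp
      then have "src f \<in> cand G f" using srcL[OF fU] by blast
      then have i2: "indist G f (src f)" unfolding cand_def poss_ident_def by simp
      have "indist G f u" by (rule indist_trans[OF i2 indist_sym[OF i1]])
      note \<open>col (src f) = c1 u\<close> \<open>indist G f u\<close>
      moreover have "c1 f = c1 u" unfolding c1_def
        using fold_step3_class[of us G f u col0] us uU fU \<open>indist G f u\<close> by simp
      ultimately show ?thesis by simp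
    qed
    moreover have "src f \<in> known G" using LK[OF fU] srcL[OF fU] by blast
    ultimately show "\<exists>g\<in>known G. col f = col g \<and> pot' f = pot G g" by metis
  qed
  have ex: "\<exists>col pot'. lifg_run G 0 col pot'"
  proof -
    obtain us where us: "distinct us" "set us = unknown G" using finite_distinct_list[OF finU] by metis
    obtain col0 where c0: "init_colouring G col0" using exists_init[OF wf] by blast
    have "\<forall>f\<in>unknown G. \<exists>L. maximal_pi_subset G (cand G f) L"
      using exists_max_subset[OF finite_subset[OF cK finK]] by blast
    then obtain L where L: "\<forall>f\<in>unknown G. maximal_pi_subset G (cand G f) (L f)" by (rule bchoice[elim_format]) blast
    define src where "src f = (SOME x. x \<in> L f)" for f
    have sr: "\<forall>f\<in>unknown G. L f \<noteq> {} \<longrightarrow> src f \<in> L f" unfolding src_def by (simp add: some_in_eq)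
    define r where "r = fold (step4 G 0 L src) us (fold (step3 G) us col0, pot G)"
    have "lifg_run G 0 (fst r) (snd r)" unfolding lifg_run_def
      using us c0 L sr r_def by (intro exI[of _ us] exI[of _ col0] exI[of _ L] exI[of _ src]) simp
    then show ?thesis by blast
  qed
  show ?thesis using ex run_prop by (intro exI[of _ 0]) auto
qed

end
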